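(* (i) For all $x,x'\in\mathcal S(p)$, $K_p^\ell(x,x')\le K_p^\ell(\min(x,x'),\min(x,x'))$. (ii) If $x\mapsto \mathbb E[\chi^\ell(X,x)]/p(x)$ is non-decreasing on $\mathcal S(p)$, then for each fixed $x'\in\mathcal S(p)$ the function $x\mapsto K_p^\ell(x,x')/p(x)$ is non-decreasing on $\{x\in\mathcal S(p): x<x'\}$. (iii) If $x\mapsto \mathbb E[\chi^{-\ell}(x,X)]/p(x)$ is non-increasing on $\mathcal S(p)$, then for each fixed $x'\in\mathcal S(p)$ the function $x\mapsto K_p^\ell(x,x')/p(x)$ is non-increasing on $\{x\in\mathcal S(p): x>x'\}$.
   Context: Let $\mu$ be either the counting measure on $\mathcal X=\mathbb Z$ or Lebesgue measure on $\mathcal X=\mathbb R$. Let $X$ be a random variable with density $p$ with respect to $\mu$ and support $\mathcal S(p)=\{x: p(x)>0\}$. Standing assumption: in the counting case $\mathcal S(p)=[a,b]\cap\mathbb Z$ for some $a<b\in\mathbb Z\cup\{\pm\infty\}$; in the Lebesgue case $\mathcal S(p)$ has interior $(a,b)$ and closure $[a,b]$ for some $a<b\in\mathbb R\cup\{\pm\infty\}$; $p$ is not a point mass. Fix $\ell\in\{-1,0,1\}$; $\ell=0$ is used with Lebesgue measure, $\ell=\pm1$ with counting measure. Set $a_\ell=\mathbb I[\ell=1]$, $\chi^{\ell}(x,y)=\mathbb I[x\le y-a_\ell]$ (so $\chi^{-\ell}$ is obtained by replacing $\ell$ with $-\ell$), and $K_p^{\ell}(x,x')=\mathbb E[\chi^\ell(X,x)\chi^\ell(X,x')]-\mathbb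 E[\chi^\ell(X,x)]\mathbb E[\chi^\ell(X,x')]$ for $x,x'\in\mathcal S(p)$. *)

theory Defs
  imports "HOL-Analysis.Analysis"
begin

text \<open>Generic setting: ambient type 'a (int for the counting case, real for the
Lebesgue case), reference measure mu, density p, index l in {-1,0,1}.\<close>

definition a_idx :: "int \<Rightarrow> 'a::linordered_idom" where
  "a_idx l = (if l = 1 then 1 else 0)"

definition chi :: "int \<Rightarrow> 'a::linordered_idom \<Rightarrow> 'a \<Rightarrow> real" where
  "chi l x y = (if x \<le> y - a_idx l then 1 else 0)"

definition expect :: "'a measure \<Rightarrow> ('a \<Rightarrow> real) \<Rightarrow> ('a \<Rightarrow> real) \<Rightarrow> real" where
  "expect mu p f = integral\<^sup>L (density mu (\<lambda>y. ennreal (p y))) f"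

definition supp :: "('a \<Rightarrow> real) \<Rightarrow> 'a set" where
  "supp p = {x. p x > 0}"

definition Kp :: "'a measure \<Rightarrow> ('a \<Rightarrow> real) \<Rightarrow> int \<Rightarrow> 'a::linordered_idom \<Rightarrow> 'a \<Rightarrow> real" where
  "Kp mu p l x x' =
     expect mu p (\<lambda>y. chi l y x * chi l y x')
     - expect mu p (\<lambda>y. chi l y x) * expect mu p (\<lambda>y. chi l y x')"

definition is_density :: "'a measure \<Rightarrow> ('a \<Rightarrow> real) \<Rightarrow> bool" where
  "is_density mu p \<longleftrightarrow> p \<in> borel_measurable mu \<and> (\<forall>x. 0 \<le> p x)
      \<and> (\<integral>\<^sup>+ x. ennreal (p x) \<partial>mu) = 1"

definition kernel_claims :: "('a::linordered_idom) measure \<Rightarrow> ('a \<Rightarrow> real) \<Rightarrow> int \<Rightarrow> bool" where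
  "kernel_claims mu p (l::int) \<longleftrightarrow>
    (\<forall>x\<in>supp p. \<forall>x'\<in>supp p.
        Kp mu p l x x' \<le> Kp mu p l (min x x') (min x x'))
  \<and> (monotone_on (supp p) (\<le>) (\<le>) (\<lambda>x. expect mu p (\<lambda>y. chi l y x) / p x)
      \<longrightarrow> (\<forall>x'\<in>supp p. monotone_on {x\<in>supp p. x < x'} (\<le>) (\<le>) (\<lambda>x. Kp mu p l x x' / p x)))
  \<and> (monotone_on (supp p) (\<le>) (\<ge>) (\<lambda>x. expect mu p (\<lambda>y. chi (-l) x y) / p x)
      \<longrightarrow> (\<forall>x'\<in>supp p. monotone_on {x\<in>supp p. x' < x} (\<le>) (\<ge>) (\<lambda>x. Kp mu p l x x' / p x)))"

end

theory Submission
  imports Defs "HOL-Probability.Probability_Measure"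
begin


lemma chi_min: "chi l y x * chi l y x' = chi l y (min x x')"
  by (auto simp: chi_def min_def)

lemma generic:
  fixes mu :: "'a::linordered_idom measure" and p :: "'a \<Rightarrow> real"
  defines "N \<equiv> density mu (\<lambda>y. ennreal (p y))"
  assumes ps: "prob_space N"
    and meas: "\<And>x. (\<lambda>y. chi l y x) \<in> borel_measurable mu"
    and meas2: "\<And>x. (\<lambda>y. chi (-l) x y) \<in> borel_measurable mu"
    and complAE: "\<And>x. AE y in N. chi (-l) x y = 1 - chi l y x"
  shows "kernel_claims mu p l"
proof -
  interpret prob_space N by (fact ps)
  define F where "F x = expect mu p (\<lambda>y. chi l y x)" for x
  have measN: "(\<lambda>y. chi l y x) \<in> borel_measurable N" for x
    unfolding N_def using meas by simp  
  have intN: "integrable N (\<lambda>y. chi l y x)" for x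
    by (rule integrable_const_bound[where B=1]) (use measN in \<open>auto simp: chi_def\<close>)
  have compl: "expect mu p (\<lambda>y. chi (-l) x y) = 1 - expect mu p (\<lambda>y. chi l y x)" for x
  proof -
    have "expect mu p (\<lambda>y. chi (-l) x y) = integral\<^sup>L N (\<lambda>y. 1 - chi l y x)"
      unfolding expect_def N_def[symmetric]
      by (rule integral_cong_AE) (use meas2 measN complAE in \<open>auto simp: N_def\<close>)
    also have "\<dots> = 1 - expect mu p (\<lambda>y. chi l y x)"
      unfolding expect_def N_def[symmetric]
      using intN[of x] prob_space by (simp add: Bochner_Integration.integral_diff)
    finally show ?thesis .
  qed
  have K: "Kp mu p l x x' = F (min x x') - F x * F x'" for x x'
    unfolding Kp_def F_def chi_min ..
  have F01: "0 \<le> F x \<and> F x \<le> 1" for x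
  proof
    show "0 \<le> F x" unfolding F_def expect_def N_def[symmetric]
      by (rule integral_nonneg_AE) (simp add: chi_def)
    have "F x \<le> integral\<^sup>L N (\<lambda>y. 1)" unfolding F_def expect_def N_def[symmetric]
      by (rule integral_mono) (use intN in \<open>auto simp: chi_def\<close>)
    then show "F x \<le> 1" using prob_space by simp
  qed
  have Fmono: "x \<le> x' \<Longrightarrow> F x \<le> F x'" for x x'
    unfolding F_def expect_def N_def[symmetric]
    by (rule integral_mono) (use intN in \<open>auto simp: chi_def\<close>)
  have Kle: "x \<le> x' \<Longrightarrow> Kp mu p l x x' = F x * (1 - F x')" for x x'
    by (simp add: K min_def algebra_simps)
  have Kge: "x' \<le> x \<Longrightarrow> Kp mu p l x x' = F x' * (1 - F x)" for x x'
    by (simp add: K min_def algebra_simps)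
  have i: "Kp mu p l x x' \<le> Kp mu p l (min x x') (min x x')" for x x'
  proof (cases "x \<le> x'")
    case True
    then show ?thesis using Kle[OF True] Kle[of x x] Fmono[OF True] F01[of x]
      by (simp add: min_def mult_left_mono)
  next
    case False
    then have h: "x' \<le> x" by simp
    then show ?thesis using Kge[OF h] Kle[of x' x'] Fmono[OF h] F01[of x'] False
      by (simp add: min_def mult_left_mono)
  qed
  have ii: "monotone_on {x\<in>supp p. x < x'} (\<le>) (\<le>) (\<lambda>x. Kp mu p l x x' / p x)"
    if m: "monotone_on (supp p) (\<le>) (\<le>) (\<lambda>x. F x / p x)" for x'
  proof (rule monotone_onI)
    fix x y assume xy: "x \<in> {x\<in>supp p. x < x'}" "y \<in> {x\<in>supp p. x < x'}" "x \<le> y"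
    have "F x / p x \<le> F y / p y" using m xy by (auto dest: monotone_onD)
    then have "F x / p x * (1 - F x') \<le> F y / p y * (1 - F x')"
      using F01[of x'] by (intro mult_right_mono) auto
    then show "Kp mu p l x x' / p x \<le> Kp mu p l y x' / p y"
      using xy Kle[of x x'] Kle[of y x'] by simp
  qed
  have iii: "monotone_on {x\<in>supp p. x' < x} (\<le>) (\<ge>) (\<lambda>x. Kp mu p l x x' / p x)"
    if m: "monotone_on (supp p) (\<le>) (\<ge>) (\<lambda>x. (1 - F x) / p x)" for x'
  proof (rule monotone_onI)
    fix x y assume xy: "x \<in> {x\<in>supp p. x' < x}" "y \<in> {x\<in>supp p. x' < x}" "x \<le> y"
    have "(1 - F y) / p y \<le> (1 - F x) / p x" using m xy by (auto dest: monotone_onD)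
    then have "F x' * ((1 - F y) / p y) \<le> F x' * ((1 - F x) / p x)"
      using F01[of x'] by (intro mult_left_mono) auto
    then show "Kp mu p l y x' / p y \<le> Kp mu p l x x' / p x"
      using xy Kge[of x' x] Kge[of x' y] by simp
  qed
  show ?thesis unfolding kernel_claims_def
    using i ii iii by (simp add: compl F_def[symmetric])
qed


lemma int_case:
  fixes p :: "int \<Rightarrow> real"
  assumes "is_density (count_space UNIV) p" "l \<in> {-1, 1}"
  shows "kernel_claims (count_space UNIV) p l"
proof (rule generic)
  show "prob_space (density (count_space UNIV) (\<lambda>y. ennreal (p y)))"
    by (rule prob_spaceI) (use assms(1) in \<open>simp add: is_density_def emeasure_density\<close>)
  show "AE y in density (count_space UNIV) (\<lambda>y. ennreal (p y)). chi (-l) x y = 1 - chi l y x" for x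
    using assms(2) by (auto simp: chi_def a_idx_def)
qed auto

lemma real_case:
  fixes p :: "real \<Rightarrow> real"
  assumes "is_density lborel p"
  shows "kernel_claims lborel p 0"
proof (rule generic)
  have pm: "(\<lambda>y. ennreal (p y)) \<in> borel_measurable lborel"
    using assms by (simp add: is_density_def)
  show "prob_space (density lborel (\<lambda>y. ennreal (p y)))"
    by (rule prob_spaceI) (use assms(1) pm in \<open>simp add: is_density_def emeasure_density\<close>)
  show "AE y in density lborel (\<lambda>y. ennreal (p y)). chi (-0) x y = 1 - chi 0 y x" for x
    unfolding AE_density[OF pm]
    using AE_lborel_singleton[of x] by eventually_elim (auto simp: chi_def a_idx_def)
  show "(\<lambda>y. chi 0 y x) \<in> borel_measurable lborel" for x :: real
    proof -
    have "(\<lambda>y::real. if y \<le> x then 1 else 0::real) = indicator {..x}"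
      by (auto simp: indicator_def)
    then show ?thesis unfolding chi_def a_idx_def by simp
  qed
  show "(\<lambda>y. chi (-0) x y) \<in> borel_measurable lborel" for x :: real
    proof -
    have "(\<lambda>y::real. if y \<le> x then 1 else 0::real) = indicator {..x}"
      by (auto simp: indicator_def)
    then show ?thesis unfolding chi_def a_idx_def by simp
  qed
qed



theorem mainTheorem8:
  shows "(\<forall>(p::int \<Rightarrow> real) (l::int).
            is_density (count_space UNIV) p \<and> l \<in> {-1, 1} \<and>
            (\<exists>a b::ereal. a < b
               \<and> (a = -\<infinity> \<or> (\<exists>k::int. a = ereal (real_of_int k)))
               \<and> (b = \<infinity> \<or> (\<exists>k::int. b = ereal (real_of_int k)))
               \<and> supp p = {x. a \<le> ereal (real_of_int x) \<and> ereal (real_of_int x) \<le> b})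
          \<longrightarrow> kernel_claims (count_space UNIV) p l)
       \<and> (\<forall>p::real \<Rightarrow> real.
            is_density lborel p \<and>
            (\<exists>a b::ereal. a < b
               \<and> interior (supp p) = {x. a < ereal x \<and> ereal x < b}
               \<and> closure (supp p) = {x. a \<le> ereal x \<and> ereal x \<le> b})
          \<longrightarrow> kernel_claims lborel p 0)"
proof (intro conjI allI impI)
  fix p :: "int \<Rightarrow> real" and l :: int
  assume h: "is_density (count_space UNIV) p \<and> l \<in> {-1, 1} \<and> (\<exists>a b::ereal. a < b
               \<and> (a = -\<infinity> \<or> (\<exists>k::int. a = ereal (real_of_int k)))
               \<and> (b = \<infinity> \<or> (\<exists>k::int. b = ereal (real_of_int k)))
               \<and> supp p = {x. a \<le> ereal (real_of_int x) \<and> ereal (real_of_int x) \<le> b})"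
  from h show "kernel_claims (count_space UNIV) p l" using int_case by blast
next
  fix p :: "real \<Rightarrow> real"
  assume h: "is_density lborel p \<and>
            (\<exists>a b::ereal. a < b
               \<and> interior (supp p) = {x. a < ereal x \<and> ereal x < b}
               \<and> closure (supp p) = {x. a \<le> ereal x \<and> ereal x \<le> b})"
  from h show "kernel_claims lborel p 0" using real_case by blast
qed

end
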